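(* Let $n\in\mathbb{N}$ and let $(\Pi_1,\Pi_2,\dots,\Pi_n)$ be a uniformly random permutation of $(1,2,\dots,n)$. Then for all $r\ge1$, $$\Pr\Big[\big|\{i\in\{1,\dots,\lfloor n/2\rfloor\}:|\Pi_{2i-1}-\Pi_{2i}|\le r/12\}\big|\ge r\Big]\le 2^{-r}.$$ *)

theory Defs
  imports "HOL-Probability.Probability" "HOL-Combinatorics.Permutations"
begin

end

theory Submission
  imports Defs
begin

lemma kk: "real k ^ k \<le> 3^k * fact k"
proof -
  have s: "(\<lambda>n. real k ^ n /\<^sub>R fact n) sums exp (real k)" by (rule exp_converges)
  have "sum (\<lambda>n. real k ^ n /\<^sub>R fact n) {k} \<le> exp (real k)"
    using sum_le_suminf[OF sums_summable[OF s], of "{k}"] sums_unique[OF s] by simp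
  hence "real k ^ k / fact k \<le> exp (real k)" by (simp add: divide_inverse mult.commute)
  also have "exp (real k) = exp 1 ^ k" using exp_of_nat_mult[of k 1] by simp
  also have "\<dots> \<le> 3 ^ k" by (rule power_mono[OF exp_le]) simp
  finally show ?thesis by (simp add: divide_le_eq mult.commute)
qed

definition closeA :: "nat \<Rightarrow> real \<Rightarrow> nat set \<Rightarrow> (nat \<Rightarrow> nat) set" where
  "closeA n r S = {\<pi>. \<pi> permutes {1..n} \<and> (\<forall>i\<in>S. \<bar>real (\<pi>(2*i-1)) - real (\<pi>(2*i))\<bar> \<le> r/12)}"

lemma finite_closeA: "finite (closeA n r S)"
  by (rule finite_subset[of _ "{\<pi>. \<pi> permutes {1..n}}"]) (auto simp: closeA_def finite_permutations)

lemma cardD: "card {\<delta>::int. \<delta> \<noteq> 0 \<and> \<bar>\<delta>\<bar> \<le> d} \<le> 2 * nat d"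
proof -
  have "{\<delta>::int. \<delta> \<noteq> 0 \<and> \<bar>\<delta>\<bar> \<le> d} = {-d..d} - {0}" by auto
  moreover have "card ({-d..d} - {0::int}) \<le> 2 * nat d"
    by (cases "d \<ge> 0") (auto simp: card_Diff_singleton_if)
  ultimately show ?thesis by simp
qed

lemma cardF:
  assumes "finite S"
  shows "n - 2*card S - 1 \<le> card ({1..n} - (\<Union>j\<in>S. {2*j-1, 2*j}) - {2*i-1})"
proof -
  define U where "U = (\<Union>j\<in>S. {2*j-1, 2*j})"
  have "card (U \<union> {2*i-1}) \<le> card U + card {2*i-1}" by (rule card_Un_le)
  hence c1: "card (U \<union> {2*i-1}) \<le> card U + 1" by simp
  have "card U \<le> (\<Sum>j\<in>S. card {2*j-1, 2*j})"
    unfolding U_def using assms by (rule card_UN_le)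
  also have "\<dots> \<le> (\<Sum>j\<in>S. 2)" by (rule sum_mono) (simp add: card_insert_le_m1)
  finally have c2: "card U \<le> 2 * card S" by simp
  have "card {1..n} - card (U \<union> {2*i-1}) \<le> card ({1..n} - (U \<union> {2*i-1}))"
    by (rule diff_card_le_card_Diff) (simp add: U_def assms)
  moreover have "{1..n} - (U \<union> {2*i-1}) = {1..n} - U - {2*i-1}" by blast
  ultimately have "n - card (U \<union> {2*i-1}) \<le> card ({1..n} - U - {2*i-1})" by simp
  with c1 c2 show ?thesis unfolding U_def by linarith
qed

lemma step:
  assumes fin: "finite S" and Ssub: "S \<subseteq> {1..n div 2}" and i: "i \<in> {1..n div 2}" "i \<notin> S" and r: "r \<ge> 0"
  shows "card (closeA n r (insert i S)) * (n - 2*card S - 1) \<le> 2 * nat \<lfloor>r/12\<rfloor> * card (closeA n r S)"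
proof -
  define F where "F = {1..n} - (\<Union>j\<in>S. {2*j-1, 2*j}) - {2*i-1}"
  define D where "D = {\<delta>::int. \<delta> \<noteq> 0 \<and> \<bar>\<delta>\<bar> \<le> \<lfloor>r/12\<rfloor>}"
  define \<Phi> where "\<Phi> = (\<lambda>(\<sigma>::nat\<Rightarrow>nat, q). (\<sigma> \<circ> Transposition.transpose (2*i) q, int (\<sigma> (2*i)) - int (\<sigma> (2*i-1))))"
  have i2: "2*i \<in> {1..n}" "2*i-1 \<in> {1..n}" using i by auto
  have inj: "inj_on \<Phi> (closeA n r (insert i S) \<times> F)"
  proof (rule inj_onI)
    fix x y
    assume ax: "x \<in> closeA n r (insert i S) \<times> F" and ay: "y \<in> closeA n r (insert i S) \<times> F"
      and ex: "\<Phi> x = \<Phi> y"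
    obtain \<sigma>1 q1 where x: "x = (\<sigma>1, q1)" by (cases x)
    obtain \<sigma>2 q2 where y: "y = (\<sigma>2, q2)" by (cases y)
    have a: "(\<sigma>1, q1) \<in> closeA n r (insert i S) \<times> F" "(\<sigma>2, q2) \<in> closeA n r (insert i S) \<times> F"
      and e: "\<Phi> (\<sigma>1, q1) = \<Phi> (\<sigma>2, q2)" using ax ay ex x y by auto
    have p1: "\<sigma>1 permutes {1..n}" and p2: "\<sigma>2 permutes {1..n}" using a by (auto simp: closeA_def)
    have q: "q1 \<noteq> 2*i-1" "q2 \<noteq> 2*i-1" using a by (auto simp: F_def)
    have ie: "2*i-1 \<noteq> 2*i" using i by auto
    define \<pi> where "\<pi> = \<sigma>1 \<circ> Transposition.transpose (2*i) q1"
    have e1: "\<pi> = \<sigma>2 \<circ> Transposition.transpose (2*i) q2"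
      and e2: "int (\<sigma>1 (2*i)) - int (\<sigma>1 (2*i-1)) = int (\<sigma>2 (2*i)) - int (\<sigma>2 (2*i-1))"
      using e by (auto simp: \<Phi>_def \<pi>_def)
    have "\<pi> (2*i-1) = \<sigma>1 (2*i-1)" using q ie by (simp add: \<pi>_def transpose_def)
    moreover have "\<pi> (2*i-1) = \<sigma>2 (2*i-1)" using q ie by (simp add: e1 transpose_def)
    ultimately have "\<sigma>1 (2*i) = \<sigma>2 (2*i)" using e2 by simp
    moreover have "\<pi> q1 = \<sigma>1 (2*i)" by (simp add: \<pi>_def transpose_def)
    moreover have "\<pi> q2 = \<sigma>2 (2*i)" by (simp add: e1 transpose_def)
    moreover have "inj \<pi>" unfolding \<pi>_def using p1 by (simp add: permutes_inj inj_compose)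
    ultimately have qq: "q1 = q2" by (metis injD)
    have "\<sigma>1 = \<pi> \<circ> Transposition.transpose (2*i) q1" by (simp add: \<pi>_def comp_assoc)
    moreover have "\<sigma>2 = \<pi> \<circ> Transposition.transpose (2*i) q2" by (simp add: e1 comp_assoc)
    ultimately show "x = y" using qq x y by simp
  qed
  have img: "\<Phi> ` (closeA n r (insert i S) \<times> F) \<subseteq> closeA n r S \<times> D"
  proof (rule image_subsetI)
    fix x assume ax: "x \<in> closeA n r (insert i S) \<times> F"
    obtain \<sigma> q where x: "x = (\<sigma>, q)" by (cases x)
    have a: "\<sigma> \<in> closeA n r (insert i S)" "q \<in> F" using ax x by auto
    have p: "\<sigma> permutes {1..n}" using a by (auto simp: closeA_def)
    have qn: "q \<in> {1..n}" using a by (auto simp: F_def)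
    have pp: "\<sigma> \<circ> Transposition.transpose (2*i) q permutes {1..n}"
      by (rule permutes_compose[OF permutes_swap_id[OF i2(1) qn] p])
    have cl: "\<forall>j\<in>S. \<bar>real ((\<sigma> \<circ> Transposition.transpose (2*i) q)(2*j-1)) - real ((\<sigma> \<circ> Transposition.transpose (2*i) q)(2*j))\<bar> \<le> r/12"
    proof
      fix j assume j: "j \<in> S"
      have "j \<noteq> i" "j \<ge> 1" using j i Ssub by auto
      moreover have "q \<noteq> 2*j-1" "q \<noteq> 2*j" using a j by (auto simp: F_def)
      ultimately have "(\<sigma> \<circ> Transposition.transpose (2*i) q)(2*j-1) = \<sigma> (2*j-1)"
        "(\<sigma> \<circ> Transposition.transpose (2*i) q)(2*j) = \<sigma> (2*j)"
        by (auto simp: transpose_def)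
      thus "\<bar>real ((\<sigma> \<circ> Transposition.transpose (2*i) q)(2*j-1)) - real ((\<sigma> \<circ> Transposition.transpose (2*i) q)(2*j))\<bar> \<le> r/12"
        using a j by (auto simp: closeA_def)
    qed
    have ci: "\<bar>real (\<sigma> (2*i-1)) - real (\<sigma> (2*i))\<bar> \<le> r/12" using a by (auto simp: closeA_def)
    have ie: "2*i \<noteq> 2*i-1" using i by auto
    have ne: "\<sigma> (2*i) \<noteq> \<sigma> (2*i-1)" using permutes_inj[OF p] ie unfolding inj_def by blast
    have "real_of_int \<bar>int (\<sigma> (2*i)) - int (\<sigma> (2*i-1))\<bar> \<le> r/12" using ci by (simp add: abs_minus_commute)
    hence "\<bar>int (\<sigma> (2*i)) - int (\<sigma> (2*i-1))\<bar> \<le> \<lfloor>r/12\<rfloor>"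
      by (simp only: le_floor_iff)
    with ne have "int (\<sigma> (2*i)) - int (\<sigma> (2*i-1)) \<in> D" by (auto simp: D_def)
    thus "\<Phi> x \<in> closeA n r S \<times> D" using pp cl x by (auto simp: \<Phi>_def closeA_def)
  qed
  have fD: "finite D" unfolding D_def by (rule finite_subset[of _ "{-\<lfloor>r/12\<rfloor>..\<lfloor>r/12\<rfloor>}"]) auto
  have "card (closeA n r (insert i S) \<times> F) \<le> card (closeA n r S \<times> D)"
    by (rule card_inj_on_le[OF inj img]) (simp add: finite_closeA fD)
  hence "card (closeA n r (insert i S)) * card F \<le> card (closeA n r S) * card D"
    by (simp add: card_cartesian_product)
  moreover have "card D \<le> 2 * nat \<lfloor>r/12\<rfloor>" unfolding D_def by (rule cardD)
  moreover have "n - 2*card S - 1 \<le> card F" unfolding F_def by (rule cardF[OF fin])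
  ultimately have "card (closeA n r (insert i S)) * (n - 2*card S - 1) \<le> card (closeA n r S) * (2 * nat \<lfloor>r/12\<rfloor>)"
    using mult_le_mono2 order_trans by meson
  thus ?thesis by (simp add: mult.commute)
qed


lemma closeA_bound:
  assumes "finite S" "S \<subseteq> {1..n div 2}" "r \<ge> 0"
  shows "card (closeA n r S) * (\<Prod>j<card S. n - 2*j - 1) \<le> (2 * nat \<lfloor>r/12\<rfloor>) ^ card S * fact n"
  using assms(1,2)
proof (induction S rule: finite_induct)
  case empty
  have "closeA n r {} = {\<pi>. \<pi> permutes {1..n}}" by (simp add: closeA_def)
  then show ?case by (simp add: card_permutations)
next
  case (insert x S)
  define c where "c = card S"
  define P where "P = (\<Prod>j<c. n - 2*j - 1)"
  define d where "d = 2 * nat \<lfloor>r/12\<rfloor>"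
  have IH: "card (closeA n r S) * P \<le> d ^ c * fact n"
    using insert by (simp add: c_def P_def d_def)
  have st: "card (closeA n r (insert x S)) * (n - 2*c - 1) \<le> d * card (closeA n r S)"
    unfolding c_def d_def by (rule step) (use insert assms(3) in auto)
  have "card (closeA n r (insert x S)) * (\<Prod>j<card (insert x S). n - 2*j - 1)
      = (card (closeA n r (insert x S)) * (n - 2*c - 1)) * P"
    using insert by (simp add: c_def P_def)
  also have "\<dots> \<le> (d * card (closeA n r S)) * P" using st by (rule mult_le_mono1)
  also have "\<dots> = d * (card (closeA n r S) * P)" by simp
  also have "\<dots> \<le> d * (d ^ c * fact n)" using IH by (rule mult_le_mono2)
  also have "\<dots> = d ^ card (insert x S) * fact n" using insert by (simp add: c_def)
  finally show ?case by (simp add: d_def)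
qed

lemma choose_fact_le:
  assumes "k \<le> m" "2*m \<le> n"
  shows "(m choose k) * fact k \<le> (\<Prod>j<k. n - 2*j - 1)"
  using assms
proof (induction k arbitrary: m n)
  case 0
  then show ?case by simp
next
  case (Suc k)
  have IH: "((m-1) choose k) * fact k \<le> (\<Prod>j<k. (n-2) - 2*j - 1)"
    using Suc.IH[of "m-1" "n-2"] Suc.prems by simp
  have "(m choose Suc k) * fact (Suc k) = (Suc k * (m choose Suc k)) * fact k"
    by (simp add: algebra_simps)
  also have "\<dots> = m * (((m-1) choose k) * fact k)"
    using times_binomial_minus1_eq[of "Suc k" m] by simp
  also have "\<dots> \<le> (n - 1) * (\<Prod>j<k. (n-2) - 2*j - 1)"
    using Suc.prems IH by (intro mult_le_mono) auto
  also have "\<dots> = (\<Prod>j<Suc k. n - 2*j - 1)"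
    unfolding prod.lessThan_Suc_shift by (simp add: algebra_simps)
  finally show ?case .
qed

theorem claim3p12:
  fixes n :: nat and r :: real
  assumes "r \<ge> 1"
  shows "measure_pmf.prob (pmf_of_set {\<pi>. \<pi> permutes {1..n}})
           {\<pi>. real (card {i \<in> {1..n div 2}.
                     \<bar>real (\<pi> (2*i - 1)) - real (\<pi> (2*i))\<bar> \<le> r / 12}) \<ge> r}
         \<le> 2 powr (- r)"
proof -
  define P where "P = {\<pi>::nat\<Rightarrow>nat. \<pi> permutes {1..n}}"
  define E where "E = {\<pi>::nat\<Rightarrow>nat. real (card {i \<in> {1..n div 2}.
                     \<bar>real (\<pi> (2*i - 1)) - real (\<pi> (2*i))\<bar> \<le> r / 12}) \<ge> r}"
  define m where "m = n div 2"
  define k where "k = nat \<lceil>r\<rceil>"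
  define d where "d = nat \<lfloor>r/12\<rfloor>"
  define X where "X = card (P \<inter> E)"
  have fP: "finite P" unfolding P_def by (simp add: finite_permutations)
  have cP: "card P = fact n" unfolding P_def by (simp add: card_permutations)
  have nP: "P \<noteq> {}" using cP by auto
  have prob: "measure_pmf.prob (pmf_of_set P) E = real X / fact n"
    using measure_pmf_of_set[OF nP fP] cP by (simp add: X_def)
  have kr: "r \<le> real k" unfolding k_def by linarith
  have k1: "k \<ge> 1" unfolding k_def using assms by linarith
  have cardk: "k \<le> card {i \<in> {1..m}. \<bar>real (\<pi> (2*i - 1)) - real (\<pi> (2*i))\<bar> \<le> r / 12}"
    if "\<pi> \<in> E" for \<pi>
  proof -
    have "r \<le> real (card {i \<in> {1..m}. \<bar>real (\<pi> (2*i - 1)) - real (\<pi> (2*i))\<bar> \<le> r / 12})"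
      using that by (simp add: E_def m_def)
    thus ?thesis unfolding k_def by linarith
  qed
  have main: "real X * 2 ^ k \<le> fact n"
  proof (cases "m < k")
    case True
    have "P \<inter> E = {}"
    proof (rule ccontr)
      assume "P \<inter> E \<noteq> {}"
      then obtain \<pi> where "\<pi> \<in> E" by auto
      from cardk[OF this] have "k \<le> card {i \<in> {1..m}. \<bar>real (\<pi> (2*i - 1)) - real (\<pi> (2*i))\<bar> \<le> r / 12}" .
      also have "\<dots> \<le> card {1..m}" by (rule card_mono) auto
      finally show False using True by simp
    qed
    thus ?thesis by (simp add: X_def)
  next
    case False
    hence km: "k \<le> m" by simp
    define I where "I = {S. S \<subseteq> {1..m} \<and> card S = k}"
    define Pk where "Pk = (\<Prod>j<k. n - 2*j - 1)"
    have fI: "finite I" unfolding I_def by (rule finite_subset[of _ "Pow {1..m}"]) auto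
    have cI: "card I = m choose k" unfolding I_def by (simp add: n_subsets)
    have sub: "P \<inter> E \<subseteq> (\<Union>S\<in>I. closeA n r S)"
    proof
      fix \<pi> assume a: "\<pi> \<in> P \<inter> E"
      define T where "T = {i \<in> {1..m}. \<bar>real (\<pi> (2*i - 1)) - real (\<pi> (2*i))\<bar> \<le> r / 12}"
      have "k \<le> card T" using cardk a by (simp add: T_def)
      then obtain S where S: "S \<subseteq> T" "card S = k" using obtain_subset_with_card_n by metis
      have "S \<in> I" using S by (auto simp: I_def T_def)
      moreover have "\<pi> \<in> closeA n r S" using S a by (auto simp: closeA_def P_def T_def)
      ultimately show "\<pi> \<in> (\<Union>S\<in>I. closeA n r S)" by blast
    qed
    have "X \<le> card (\<Union>S\<in>I. closeA n r S)"
      unfolding X_def by (rule card_mono[OF _ sub]) (use fI in \<open>simp add: finite_closeA\<close>)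
    also have "\<dots> \<le> (\<Sum>S\<in>I. card (closeA n r S))" by (rule card_UN_le[OF fI])
    finally have X1: "X * Pk \<le> (\<Sum>S\<in>I. card (closeA n r S) * Pk)"
      by (simp add: sum_distrib_right[symmetric] mult_le_mono1)
    have "(\<Sum>S\<in>I. card (closeA n r S) * Pk) \<le> (\<Sum>S\<in>I. (2*d)^k * fact n)"
    proof (rule sum_mono)
      fix S assume "S \<in> I"
      hence S: "finite S" "S \<subseteq> {1..n div 2}" "card S = k"
        by (auto simp: I_def m_def intro: finite_subset)
      show "card (closeA n r S) * Pk \<le> (2*d)^k * fact n"
        using closeA_bound[OF S(1,2)] assms S(3) by (simp add: Pk_def d_def)
    qed
    with X1 have X2: "X * Pk \<le> (m choose k) * ((2*d)^k * fact n)" using cI by simp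
    have CP: "(m choose k) * fact k \<le> Pk" unfolding Pk_def
      by (rule choose_fact_le[OF km]) (simp add: m_def)
    have Cpos: "m choose k > 0" using km by simp
    have "(m choose k) * (X * fact k) = X * ((m choose k) * fact k)" by simp
    also have "\<dots> \<le> X * Pk" using CP by (rule mult_le_mono2)
    also have "\<dots> \<le> (m choose k) * ((2*d)^k * fact n)" by (rule X2)
    finally have X3: "X * fact k \<le> (2*d)^k * fact n" using Cpos by simp
    have dk: "real (12 * d) \<le> real k" unfolding d_def using kr assms by linarith
    have e12: "real (12*d) = 3 * real (4*d)" by simp
    have "3^k * real (4*d) ^ k = real (12*d) ^ k" unfolding e12 by (rule power_mult_distrib[symmetric])
    also have "\<dots> \<le> real k ^ k" by (rule power_mono[OF dk]) simp
    also have "\<dots> \<le> 3^k * fact k" by (rule kk)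
    finally have "real (4*d) ^ k \<le> fact k" by simp
    hence D4: "(4*d)^k \<le> fact k" by (metis of_nat_fact of_nat_le_iff of_nat_power)
    have "X * 2^k * fact k = 2^k * (X * fact k)" by simp
    also have "\<dots> \<le> 2^k * ((2*d)^k * fact n)" using X3 by (rule mult_le_mono2)
    also have "\<dots> = (2^k * (2*d)^k) * fact n" by (simp only: mult.assoc)
    also have "2^k * (2*d)^k = (4*d)^k"
      by (metis power_mult_distrib mult.assoc num_double numeral_times_numeral)
    also have "(4*d)^k * fact n \<le> fact k * fact n" using D4 by (rule mult_le_mono1)
    finally have "(X * 2^k) * fact k \<le> fact n * fact k" by (simp only: mult.commute[of "fact k" "fact n"])
    hence "X * 2^k \<le> fact n" by (metis fact_gt_zero mult_le_cancel2)
    hence "real (X * 2^k) \<le> real (fact n)" by (simp only: of_nat_le_iff)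
    thus ?thesis by simp
  qed
  have "real X / fact n \<le> 1 / 2^k"
    using main by (simp add: divide_simps)
  also have "\<dots> = 2 powr (- real k)" by (simp add: powr_minus powr_realpow divide_inverse)
  also have "\<dots> \<le> 2 powr (- r)" using kr by simp
  finally have fin: "real X / fact n \<le> 2 powr (- r)" .
  have "measure_pmf.prob (pmf_of_set P) E \<le> 2 powr (- r)" unfolding prob by (rule fin)
  thus ?thesis unfolding P_def E_def .
qed

end
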